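(* Let $n\in\omega$ and let $\mathcal{F}$ be a fully $\Delta$-capturing construction scheme of type $\langle m_k,n_{k+1},r_{k+1}\rangle_{k\in\omega}$ with $n_{k+1}\geq 2^{m_k}$ for all $k$. With $e_\alpha$ defined as in the context, the set $\mathbb{E}_e=\{e_\alpha:\alpha\in\omega_1\}\subseteq\mathbb{Z}^\omega$, ordered lexicographically, is $2n$-entangled.
   Context: Construction schemes: a type is a sequence $\langle m_k,n_{k+1},r_{k+1}\rangle_{k\in\omega}$ with $m_0=1$, $n_{k+1}\geq2$, $m_k>r_{k+1}$, $m_{k+1}=r_{k+1}+(m_k-r_{k+1})n_{k+1}$. A construction scheme of this type is a family $\mathcal{F}$ of nonempty finite subsets of $\omega_1$, cofinal under $\subseteq$, each member of size $m_k$ for some $k$, such that with $\mathcal{F}_k=\{F\in\mathcal{F}:|F|=m_k\}$: (i) for $E,F\in\mathcal{F}_k$, $E\cap F$ is an initial segment of $E$ and of $F$; (ii) each $F\in\mathcal{F}_{k+1}$ is $F_0\cup\dots\cup F_{n_{k+1}-1}$ with $F_i\in\mathcal{F}_k$ a $\Delta$-system with root $R(F)$, $|R(F)|=r_{k+1}$, $R(F)<F_0\setminus R(F)<\dots<F_{n_{k+1}-1}\setminus R(F)$. Let $\rho(\alpha,\beta)=\min\{k:\exists F\in\mathcal{F}_k\ \{\alpha,\beta\}\subseteq F\}$, $\|\alpha\|_k=|\{\xi<\alpha:\rho(\alpha,\xi)\leq k\}|$, $\Delta(\alpha,\beta)=$ least $k$ with $\|\alpha\|_k\ne\|\beta\|_k$.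 $\Xi_\alpha(0)=0$ and for $k\geq1$, for any $F\in\mathcal{F}_k$ containing $\alpha$, $\Xi_\alpha(k)=-1$ if $\alpha\in R(F)$, $=i$ if $\alpha\in F_i\setminus R(F)$. For finite $X\subseteq\omega_1$, $X(i)$ is its $i$-th element. $\langle D_j\rangle_{j<N}\subseteq[\omega_1]^m$ ($N\geq2$) is $\Delta$-captured at level $l$ if it is a $\Delta$-system with root $R$ of size $r$, $R<D_j\setminus R$, tails pairwise $<$-comparable, $\Xi_{D_j(a)}(l)=-1$ for $a<r$ and $=j$ for $a\geq r$, and $\Delta(D_i(a),D_j(a))=l$ for $i\neq j$, $r\leq a<m$. $\mathcal{F}$ is fully $\Delta$-capturing if for every uncountable family $\mathcal{S}$ of finite subsets of $\omega_1$ there are infinitely many $l$ such that some $n_l$ members of $\mathcal{S}$ can be enumerated as a family $\Delta$-captured at level $l$. The functions: for each $k$, let $\langle C^k_i\rangle_{0<i<n_{k+1}}$ enumerate (possibly with repetitions) the set $[m_k\setminus r_{k+1}]^{\leq n}$ of subsets of $m_k\setminus r_{k+1}$ of size at most $n$. For $\alpha<\omega_1$ define $e_\alpha:\omega\to\mathbb{Z}$ by: $e_\alpha(k)=0$ if $\Xi_\alpha(k)\leq0$; $e_\alpha(k)=\Xi_\alpha(k)$ if $\Xi_\alpha(k)>0$ and $\|\alpha\|_{k-1}\in C^{k-1}_{\Xi_\alpha(k)}$; $e_\alpha(k)=\Xi_\alpha(k)$ if $\Xi_\alpha(k)>0$, $|C^{k-1}_{\Xi_\alpha(k)}|=n$ and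 $\|\alpha\|_{k-1}<\min C^{k-1}_{\Xi_\alpha(k)}$; $e_\alpha(k)=-\Xi_\alpha(k)$ otherwise. $\mathbb{Z}^\omega$ is ordered by $f<_{lex}g$ iff $f(k)<g(k)$ for the least $k$ with $f(k)\neq g(k)$. For a linear order, an uncountable subset $\mathbb{E}$ is $k$-entangled if for every $\tau:k\to2$ and every uncountable family $\mathcal{A}\subseteq[\mathbb{E}]^k$ of pairwise disjoint sets there are distinct $a,b\in\mathcal{A}$ with $a(i)<b(i)\iff\tau(i)=0$ for all $i<k$. *)

theory Defs
  imports Main "HOL-Library.Countable_Set"
begin

text \<open>omega_1 is represented by a well-ordered type 'a that is uncountable and all of whose
proper initial segments are countable (assumptions of the main theorem).\<close>

definition is_type :: "(nat \<Rightarrow> nat) \<Rightarrow> (nat \<Rightarrow> nat) \<Rightarrow> (nat \<Rightarrow> nat) \<Rightarrow> bool" where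
  "is_type m nseq r \<longleftrightarrow> m 0 = 1 \<and>
     (\<forall>k. nseq (Suc k) \<ge> 2 \<and> m k > r (Suc k) \<and>
          m (Suc k) = r (Suc k) + (m k - r (Suc k)) * nseq (Suc k))"

definition Lev :: "(nat \<Rightarrow> nat) \<Rightarrow> 'a set set \<Rightarrow> nat \<Rightarrow> 'a set set" where
  "Lev m \<F> k = {F \<in> \<F>. card F = m k}"

definition decomp :: "nat \<Rightarrow> nat \<Rightarrow> 'a::linorder set set \<Rightarrow> 'a set \<Rightarrow> (nat \<Rightarrow> 'a set) \<Rightarrow> 'a set \<Rightarrow> bool" where
  "decomp N rr Lk F Fs R \<longleftrightarrow>
     F = (\<Union>i<N. Fs i) \<and> (\<forall>i<N. Fs i \<in> Lk) \<and>
     (\<forall>i<N. \<forall>j<N. i \<noteq> j \<longrightarrow> Fs i \<inter> Fs j = R) \<and> card R = rr \<and>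
     (\<forall>i<N. \<forall>x\<in>R. \<forall>y\<in>Fs i - R. x < y) \<and>
     (\<forall>i j. i < j \<longrightarrow> j < N \<longrightarrow> (\<forall>x\<in>Fs i - R. \<forall>y\<in>Fs j - R. x < y))"

definition construction_scheme ::
  "(nat \<Rightarrow> nat) \<Rightarrow> (nat \<Rightarrow> nat) \<Rightarrow> (nat \<Rightarrow> nat) \<Rightarrow> 'a::linorder set set \<Rightarrow> bool" where
  "construction_scheme m nseq r \<F> \<longleftrightarrow>
     is_type m nseq r \<and>
     (\<forall>F\<in>\<F>. finite F \<and> F \<noteq> {} \<and> (\<exists>k. card F = m k)) \<and>
     (\<forall>A. finite A \<longrightarrow> (\<exists>F\<in>\<F>. A \<subseteq> F)) \<and>
     (\<forall>k. \<forall>E\<in>Lev m \<F> k. \<forall>F\<in>Lev m \<F> k.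
          (\<forall>x\<in>E \<inter> F. \<forall>y\<in>E. y < x \<longrightarrow> y \<in> F) \<and>
          (\<forall>x\<in>E \<inter> F. \<forall>y\<in>F. y < x \<longrightarrow> y \<in> E)) \<and>
     (\<forall>k. \<forall>F\<in>Lev m \<F> (Suc k). \<exists>Fs R. decomp (nseq (Suc k)) (r (Suc k)) (Lev m \<F> k) F Fs R)"

definition rho :: "(nat \<Rightarrow> nat) \<Rightarrow> 'a set set \<Rightarrow> 'a \<Rightarrow> 'a \<Rightarrow> nat" where
  "rho m \<F> \<alpha> \<beta> = (LEAST k. \<exists>F\<in>Lev m \<F> k. \<alpha> \<in> F \<and> \<beta> \<in> F)"

definition norm_at :: "(nat \<Rightarrow> nat) \<Rightarrow> 'a::linorder set set \<Rightarrow> 'a \<Rightarrow> nat \<Rightarrow> nat" where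
  "norm_at m \<F> \<alpha> k = card {\<xi>. \<xi> < \<alpha> \<and> rho m \<F> \<alpha> \<xi> \<le> k}"

definition Delta :: "(nat \<Rightarrow> nat) \<Rightarrow> 'a::linorder set set \<Rightarrow> 'a \<Rightarrow> 'a \<Rightarrow> nat" where
  "Delta m \<F> \<alpha> \<beta> = (LEAST k. norm_at m \<F> \<alpha> k \<noteq> norm_at m \<F> \<beta> k)"

definition Xi :: "(nat \<Rightarrow> nat) \<Rightarrow> (nat \<Rightarrow> nat) \<Rightarrow> (nat \<Rightarrow> nat) \<Rightarrow> 'a::linorder set set \<Rightarrow> 'a \<Rightarrow> nat \<Rightarrow> int" where
  "Xi m nseq r \<F> \<alpha> k =
     (if k = 0 then 0 else
      (THE v. \<exists>F\<in>Lev m \<F> k. \<alpha> \<in> F \<and>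
         (\<exists>Fs R. decomp (nseq k) (r k) (Lev m \<F> (k - 1)) F Fs R \<and>
            ((\<alpha> \<in> R \<and> v = -1) \<or> (\<exists>i<nseq k. \<alpha> \<in> Fs i - R \<and> v = int i)))))"

text \<open>The i-th element (counting from 0) of a finite set X with respect to the strict order lt.\<close>
definition elem_at :: "('b \<Rightarrow> 'b \<Rightarrow> bool) \<Rightarrow> 'b set \<Rightarrow> nat \<Rightarrow> 'b" where
  "elem_at lt X i = (THE x. x \<in> X \<and> card {y \<in> X. lt y x} = i)"

definition captured ::
  "(nat \<Rightarrow> nat) \<Rightarrow> (nat \<Rightarrow> nat) \<Rightarrow> (nat \<Rightarrow> nat) \<Rightarrow> 'a::linorder set set \<Rightarrow> nat \<Rightarrow> nat \<Rightarrow> (nat \<Rightarrow> 'a set) \<Rightarrow> bool" where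
  "captured m nseq r \<F> l N D \<longleftrightarrow> 2 \<le> N \<and>
     (\<exists>mm R.
        (\<forall>j<N. finite (D j) \<and> card (D j) = mm) \<and>
        (\<forall>i<N. \<forall>j<N. i \<noteq> j \<longrightarrow> D i \<inter> D j = R) \<and>
        (\<forall>j<N. \<forall>x\<in>R. \<forall>y\<in>D j - R. x < y) \<and>
        (\<forall>i<N. \<forall>j<N. i \<noteq> j \<longrightarrow>
            (\<forall>x\<in>D i - R. \<forall>y\<in>D j - R. x < y) \<or> (\<forall>x\<in>D j - R. \<forall>y\<in>D i - R. x < y)) \<and>
        (\<forall>j<N. \<forall>a<card R. Xi m nseq r \<F> (elem_at (<) (D j) a) l = -1) \<and>
        (\<forall>j<N. \<forall>a. card R \<le> a \<and> a < mm \<longrightarrow> Xi m nseq r \<F> (elem_at (<) (D j) a) l = int j) \<and>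
        (\<forall>i<N. \<forall>j<N. i \<noteq> j \<longrightarrow> (\<forall>a. card R \<le> a \<and> a < mm \<longrightarrow>
            Delta m \<F> (elem_at (<) (D i) a) (elem_at (<) (D j) a) = l)))"

definition fully_Delta_capturing ::
  "(nat \<Rightarrow> nat) \<Rightarrow> (nat \<Rightarrow> nat) \<Rightarrow> (nat \<Rightarrow> nat) \<Rightarrow> 'a::linorder set set \<Rightarrow> bool" where
  "fully_Delta_capturing m nseq r \<F> \<longleftrightarrow>
     (\<forall>\<S>. \<S> \<subseteq> {A. finite A} \<and> \<not> countable \<S> \<longrightarrow>
        infinite {l. 0 < l \<and> (\<exists>D. (\<forall>j<nseq l. D j \<in> \<S>) \<and> inj_on D {..<nseq l} \<and>
                                  captured m nseq r \<F> l (nseq l) D)})"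

definition e_fun ::
  "(nat \<Rightarrow> nat) \<Rightarrow> (nat \<Rightarrow> nat) \<Rightarrow> (nat \<Rightarrow> nat) \<Rightarrow> 'a::linorder set set \<Rightarrow> (nat \<Rightarrow> nat \<Rightarrow> nat set) \<Rightarrow> nat \<Rightarrow> 'a \<Rightarrow> nat \<Rightarrow> int" where
  "e_fun m nseq r \<F> C n \<alpha> k =
     (let x = Xi m nseq r \<F> \<alpha> k; c = C (k - 1) (nat x); a = norm_at m \<F> \<alpha> (k - 1) in
      if x \<le> 0 then 0
      else if a \<in> c then x
      else if card c = n \<and> a < Min c then x
      else - x)"

definition lex_less :: "(nat \<Rightarrow> int) \<Rightarrow> (nat \<Rightarrow> int) \<Rightarrow> bool" where
  "lex_less f g \<longleftrightarrow> (\<exists>k. (\<forall>j<k. f j = g j) \<and> f k < g k)"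

definition entangled :: "('b \<Rightarrow> 'b \<Rightarrow> bool) \<Rightarrow> nat \<Rightarrow> 'b set \<Rightarrow> bool" where
  "entangled lt k E \<longleftrightarrow> \<not> countable E \<and>
     (\<forall>\<tau>::nat \<Rightarrow> nat. (\<forall>i<k. \<tau> i < 2) \<longrightarrow>
       (\<forall>\<A>. \<A> \<subseteq> {a. a \<subseteq> E \<and> finite a \<and> card a = k} \<and> \<not> countable \<A> \<and>
             (\<forall>a\<in>\<A>. \<forall>b\<in>\<A>. a \<noteq> b \<longrightarrow> a \<inter> b = {}) \<longrightarrow>
          (\<exists>a\<in>\<A>. \<exists>b\<in>\<A>. a \<noteq> b \<and>
             (\<forall>i<k. lt (elem_at lt a i) (elem_at lt b i) \<longleftrightarrow> \<tau> i = 0))))"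

end

theory Submission imports Defs begin

lemma lex_irrefl: "\<not> lex_less f f"
  unfolding lex_less_def by auto

lemma lex_trans: "lex_less f g \<Longrightarrow> lex_less g h \<Longrightarrow> lex_less f h"
proof -
  assume "lex_less f g" "lex_less g h"
  then obtain k1 k2 where k1: "\<forall>j<k1. f j = g j" "f k1 < g k1" and k2: "\<forall>j<k2. g j = h j" "g k2 < h k2"
    unfolding lex_less_def by blast
  show "lex_less f h" unfolding lex_less_def
  proof (cases k1 k2 rule: linorder_cases)
    case less
    then show "\<exists>k. (\<forall>j<k. f j = h j) \<and> f k < h k" using k1 k2 by (intro exI[of _ k1]) auto
  next
    case equal
    then show "\<exists>k. (\<forall>j<k. f j = h j) \<and> f k < h k" using k1 k2 by (intro exI[of _ k1]) auto
  next
    case greater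
    then show "\<exists>k. (\<forall>j<k. f j = h j) \<and> f k < h k" using k1 k2 by (intro exI[of _ k2]) auto
  qed
qed

lemma lex_first: "(\<forall>j<k. f j = g j) \<Longrightarrow> f k \<noteq> g k \<Longrightarrow> lex_less f g \<longleftrightarrow> f k < g k"
proof
  assume a: "\<forall>j<k. f j = g j" "f k \<noteq> g k" "lex_less f g"
  then obtain k' where k': "\<forall>j<k'. f j = g j" "f k' < g k'" unfolding lex_less_def by blast
  have "k' = k"
  proof (cases k' k rule: linorder_cases)
    case less then show ?thesis using a k' by auto
  next
    case greater then show ?thesis using a k' by auto
  qed simp
  then show "f k < g k" using k' by simp
next
  assume "\<forall>j<k. f j = g j" "f k < g k"
  then show "lex_less f g" unfolding lex_less_def by blast
qed

lemma lex_total: "f \<noteq> g \<Longrightarrow> lex_less f g \<or> lex_less g f"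
proof -
  assume "f \<noteq> g"
  then have ex: "\<exists>k. f k \<noteq> g k" by (auto simp: fun_eq_iff)
  define k where "k = (LEAST k. f k \<noteq> g k)"
  have k: "f k \<noteq> g k" unfolding k_def using LeastI_ex[OF ex] .
  have b: "\<forall>j<k. f j = g j" unfolding k_def using not_less_Least by blast
  show ?thesis using lex_first[OF b k] lex_first[of k g f] b k by fastforce
qed

lemma lex_trunc:
  assumes "\<forall>j<l. f j = f' j" "\<forall>j<l. g j = g' j" "\<exists>j<l. f j \<noteq> g j"
  shows "lex_less f g \<longleftrightarrow> lex_less f' g'"
proof -
  have ex: "\<exists>k. f k \<noteq> g k" using assms(3) by blast
  define k where "k = (LEAST k. f k \<noteq> g k)"
  have k: "f k \<noteq> g k" unfolding k_def using LeastI_ex[OF ex] .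
  have b: "\<forall>j<k. f j = g j" unfolding k_def using not_less_Least by blast
  have kl: "k < l" using assms(3) unfolding k_def by (meson Least_le le_less_trans)
  have b': "\<forall>j<k. f' j = g' j" using b assms(1,2) kl by auto
  have k': "f' k \<noteq> g' k" using k assms(1,2) kl by auto
  show ?thesis using lex_first[OF b k] lex_first[OF b' k'] assms(1,2) kl by simp
qed

lemma EA_uniq:
  assumes fin: "finite X" and irr: "\<forall>x\<in>X. \<not> lt x x"
    and tr: "\<forall>x\<in>X. \<forall>y\<in>X. \<forall>z\<in>X. lt x y \<longrightarrow> lt y z \<longrightarrow> lt x z"
    and tot: "\<forall>x\<in>X. \<forall>y\<in>X. x \<noteq> y \<longrightarrow> lt x y \<or> lt y x"
    and x: "x \<in> X" and y: "y \<in> X" and c: "card {z\<in>X. lt z x} = card {z\<in>X. lt z y}"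
  shows "x = y"
proof (rule ccontr)
  assume ne: "x \<noteq> y"
  have gen: "\<And>a b. a \<in> X \<Longrightarrow> b \<in> X \<Longrightarrow> lt a b \<Longrightarrow> card {z\<in>X. lt z a} < card {z\<in>X. lt z b}"
  proof -
    fix a b assume a: "a \<in> X" and b: "b \<in> X" and ab: "lt a b"
    have "{z\<in>X. lt z a} \<subset> {z\<in>X. lt z b}"
    proof
      show "{z\<in>X. lt z a} \<subseteq> {z\<in>X. lt z b}" using tr a b ab by blast
      show "{z\<in>X. lt z a} \<noteq> {z\<in>X. lt z b}" using a ab irr by blast
    qed
    then show "card {z\<in>X. lt z a} < card {z\<in>X. lt z b}" using fin by (simp add: psubset_card_mono)
  qed
  from tot x y ne have "lt x y \<or> lt y x" by blast
  then show False using gen[OF x y] gen[OF y x] c by auto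
qed

lemma EA1:
  assumes fin: "finite X" and irr: "\<forall>x\<in>X. \<not> lt x x"
    and tr: "\<forall>x\<in>X. \<forall>y\<in>X. \<forall>z\<in>X. lt x y \<longrightarrow> lt y z \<longrightarrow> lt x z"
    and tot: "\<forall>x\<in>X. \<forall>y\<in>X. x \<noteq> y \<longrightarrow> lt x y \<or> lt y x"
    and x: "x \<in> X"
  shows "elem_at lt X (card {z\<in>X. lt z x}) = x"
  unfolding elem_at_def
proof (rule the_equality)
  show "x \<in> X \<and> card {z\<in>X. lt z x} = card {z\<in>X. lt z x}" using x by simp
  fix y assume "y \<in> X \<and> card {z\<in>X. lt z y} = card {z\<in>X. lt z x}"
  then show "y = x" using EA_uniq[OF fin irr tr tot, of y x] x by auto
qed

lemma EA2:
  assumes fin: "finite X" and irr: "\<forall>x\<in>X. \<not> lt x x"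
    and tr: "\<forall>x\<in>X. \<forall>y\<in>X. \<forall>z\<in>X. lt x y \<longrightarrow> lt y z \<longrightarrow> lt x z"
    and tot: "\<forall>x\<in>X. \<forall>y\<in>X. x \<noteq> y \<longrightarrow> lt x y \<or> lt y x"
    and p: "p < card X"
  shows "elem_at lt X p \<in> X \<and> card {z\<in>X. lt z (elem_at lt X p)} = p"
proof -
  let ?rk = "\<lambda>x. card {z\<in>X. lt z x}"
  have inj: "inj_on ?rk X" using EA_uniq[OF fin irr tr tot] by (auto simp: inj_on_def)
  have sub: "?rk ` X \<subseteq> {..<card X}"
  proof
    fix q assume "q \<in> ?rk ` X"
    then obtain x where x: "x \<in> X" "q = ?rk x" by blast
    have "{z\<in>X. lt z x} \<subset> X" using x irr by blast
    then show "q \<in> {..<card X}" using x fin psubset_card_mono by auto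
  qed
  have "card (?rk ` X) = card {..<card X}" using card_image[OF inj] by simp
  then have "?rk ` X = {..<card X}" using card_subset_eq[OF _ sub] by simp
  then have "p \<in> ?rk ` X" using p by simp
  then obtain x where x: "x \<in> X" "?rk x = p" by (auto simp del: \<open>?rk ` X = {..<card X}\<close>)
  then show ?thesis using EA1[OF fin irr tr tot x(1)] by simp
qed

lemma EA1_lin: "finite (X::'b::linorder set) \<Longrightarrow> x \<in> X \<Longrightarrow> elem_at (<) X (card {z\<in>X. z < x}) = x"
  by (rule EA1) auto
lemma EA2_lin: "finite (X::'b::linorder set) \<Longrightarrow> p < card X \<Longrightarrow> elem_at (<) X p \<in> X \<and> card {z\<in>X. z < elem_at (<) X p} = p"
  by (rule EA2) auto
lemma EA1_lex: "finite X \<Longrightarrow> x \<in> X \<Longrightarrow> elem_at lex_less X (card {z\<in>X. lex_less z x}) = x"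
  by (rule EA1) (use lex_irrefl lex_trans lex_total in blast)+
lemma EA2_lex: "finite X \<Longrightarrow> p < card X \<Longrightarrow> elem_at lex_less X p \<in> X \<and> card {z\<in>X. lex_less z (elem_at lex_less X p)} = p"
  by (rule EA2) (use lex_irrefl lex_trans lex_total in blast)+

locale cs =
  fixes m nseq r :: "nat \<Rightarrow> nat" and FF :: "'a::linorder set set"
  assumes scheme: "construction_scheme m nseq r FF"
    and inf_univ: "infinite (UNIV :: 'a set)"
begin

abbreviation L :: "nat \<Rightarrow> 'a set set" where "L k \<equiv> Lev m FF k"

lemma P1: "is_type m nseq r"
  using scheme unfolding construction_scheme_def by (elim conjE) assumption
lemma P2: "\<forall>F\<in>FF. finite F \<and> F \<noteq> {} \<and> (\<exists>k. card F = m k)"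
  using scheme unfolding construction_scheme_def by (elim conjE) assumption
lemma P3: "\<forall>A. finite A \<longrightarrow> (\<exists>F\<in>FF. A \<subseteq> F)"
  using scheme unfolding construction_scheme_def by (elim conjE) assumption
lemma P4: "\<forall>k. \<forall>E\<in>Lev m FF k. \<forall>F\<in>Lev m FF k.
          (\<forall>x\<in>E \<inter> F. \<forall>y\<in>E. y < x \<longrightarrow> y \<in> F) \<and>
          (\<forall>x\<in>E \<inter> F. \<forall>y\<in>F. y < x \<longrightarrow> y \<in> E)"
  using scheme unfolding construction_scheme_def by (elim conjE) assumption
lemma P5: "\<forall>k. \<forall>F\<in>Lev m FF (Suc k). \<exists>Fs R. decomp (nseq (Suc k)) (r (Suc k)) (Lev m FF k) F Fs R"
  using scheme unfolding construction_scheme_def by (elim conjE) assumption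
lemma is_typ: "is_type m nseq r" by (rule P1)
lemma m0: "m 0 = 1" using is_typ unfolding is_type_def by blast
lemma nseq2: "nseq (Suc k) \<ge> 2" using is_typ unfolding is_type_def by blast
lemma r_less: "r (Suc k) < m k" using is_typ unfolding is_type_def by blast
lemma m_Suc: "m (Suc k) = r (Suc k) + (m k - r (Suc k)) * nseq (Suc k)"
  using is_typ unfolding is_type_def by blast
lemma m_less: "m k < m (Suc k)"
proof -
  have "(m k - r (Suc k)) * nseq (Suc k) \<ge> (m k - r (Suc k)) * 2" using nseq2[of k] by simp
  then show ?thesis using m_Suc[of k] r_less[of k] by linarith
qed
lemma m_mono: "strict_mono m" using m_less by (simp add: strict_mono_Suc_iff)
lemma m_pos: "m k \<ge> 1"
proof -
  have "m 0 \<le> m k" using strict_mono_less_eq[OF m_mono, of 0 k] by simp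
  then show ?thesis using m0 by simp
qed

lemma FF_prop: "F \<in> FF \<Longrightarrow> finite F \<and> F \<noteq> {} \<and> (\<exists>k. card F = m k)"
  using P2 by blast
lemma cofinal: "finite A \<Longrightarrow> \<exists>F\<in>FF. A \<subseteq> F"
  using P3 by blast
lemma coh: "E \<in> L k \<Longrightarrow> F \<in> L k \<Longrightarrow> x \<in> E \<Longrightarrow> x \<in> F \<Longrightarrow> y \<in> F \<Longrightarrow> y < x \<Longrightarrow> y \<in> E"
  using P4 by blast
lemma dec: "F \<in> L (Suc k) \<Longrightarrow> \<exists>Fs R. decomp (nseq (Suc k)) (r (Suc k)) (L k) F Fs R"
  using P5 by blast
lemma Lev_fin: "F \<in> L k \<Longrightarrow> finite F" "F \<in> L k \<Longrightarrow> card F = m k" "F \<in> L k \<Longrightarrow> F \<in> FF"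
  using FF_prop unfolding Lev_def by blast+
lemma Lev_ne: "F \<in> L k \<Longrightarrow> F \<noteq> {}"
  using FF_prop unfolding Lev_def by blast+
lemma FF_Lev: "F \<in> FF \<Longrightarrow> \<exists>k. F \<in> L k"
  using FF_prop unfolding Lev_def by blast+

lemma dec_props:
  assumes "decomp (nseq (Suc k)) (r (Suc k)) (L k) F Fs R"
  shows "F = (\<Union>i<nseq (Suc k). Fs i)" "\<And>i. i < nseq (Suc k) \<Longrightarrow> Fs i \<in> L k"
    "\<And>i. i < nseq (Suc k) \<Longrightarrow> R \<subseteq> Fs i" "card R = r (Suc k)"
    "\<And>i j. i < nseq (Suc k) \<Longrightarrow> j < nseq (Suc k) \<Longrightarrow> i \<noteq> j \<Longrightarrow> Fs i \<inter> Fs j = R"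
    "\<And>i x y. i < nseq (Suc k) \<Longrightarrow> x \<in> R \<Longrightarrow> y \<in> Fs i - R \<Longrightarrow> x < y"
    "\<And>i j x y. i < j \<Longrightarrow> j < nseq (Suc k) \<Longrightarrow> x \<in> Fs i - R \<Longrightarrow> y \<in> Fs j - R \<Longrightarrow> x < y"
    "R \<subseteq> F"
proof -
  note dd = assms[unfolded decomp_def]
  note D1 = dd[THEN conjunct1]
  note D2 = dd[THEN conjunct2, THEN conjunct1]
  note D3 = dd[THEN conjunct2, THEN conjunct2, THEN conjunct1]
  note D4 = dd[THEN conjunct2, THEN conjunct2, THEN conjunct2, THEN conjunct1]
  note D5 = dd[THEN conjunct2, THEN conjunct2, THEN conjunct2, THEN conjunct2, THEN conjunct1]
  note D6 = dd[THEN conjunct2, THEN conjunct2, THEN conjunct2, THEN conjunct2, THEN conjunct2]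
  show "F = (\<Union>i<nseq (Suc k). Fs i)" by (rule D1)
  show "\<And>i. i < nseq (Suc k) \<Longrightarrow> Fs i \<in> L k" using D2 by blast
  show "card R = r (Suc k)" by (rule D4)
  show "\<And>i j. i < nseq (Suc k) \<Longrightarrow> j < nseq (Suc k) \<Longrightarrow> i \<noteq> j \<Longrightarrow> Fs i \<inter> Fs j = R"
    using D3 by blast
  show "\<And>i x y. i < nseq (Suc k) \<Longrightarrow> x \<in> R \<Longrightarrow> y \<in> Fs i - R \<Longrightarrow> x < y" using D5 by blast
  show "\<And>i j x y. i < j \<Longrightarrow> j < nseq (Suc k) \<Longrightarrow> x \<in> Fs i - R \<Longrightarrow> y \<in> Fs j - R \<Longrightarrow> x < y"
    using D6 by blast
  note d = D1 D3
  have n2: "nseq (Suc k) \<ge> 2" by (rule nseq2)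
  show R: "\<And>i. i < nseq (Suc k) \<Longrightarrow> R \<subseteq> Fs i"
  proof -
    fix i assume i: "i < nseq (Suc k)"
    show "R \<subseteq> Fs i"
    proof (cases "i = 0")
      case True
      have "Fs 0 \<inter> Fs 1 = R" using d n2 by auto
      then show ?thesis using True by auto
    next
      case False
      have "Fs i \<inter> Fs 0 = R" using d n2 i False by auto
      then show ?thesis by auto
    qed
  qed
  have n0: "0 < nseq (Suc k)" using n2 by simp
  show "R \<subseteq> F" using R[OF n0] D1 n0 by blast
qed

lemma IS: "k \<le> l \<Longrightarrow> E \<in> L k \<Longrightarrow> F \<in> L l \<Longrightarrow> x \<in> E \<Longrightarrow> x \<in> F \<Longrightarrow> y \<in> E \<Longrightarrow> y < x \<Longrightarrow> y \<in> F"
proof (induction l arbitrary: F)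
  case 0
  then show ?case using coh[of F k E x y] by simp
next
  case (Suc l)
  show ?case
  proof (cases "k = Suc l")
    case True
    then show ?thesis using Suc.prems coh[of F k E x y] by simp
  next
    case False
    then have kl: "k \<le> l" using Suc.prems by simp
    obtain Fs R where d: "decomp (nseq (Suc l)) (r (Suc l)) (L l) F Fs R" using dec Suc.prems by blast
    obtain i where i: "i < nseq (Suc l)" "x \<in> Fs i" using dec_props(1)[OF d] Suc.prems by blast
    have "y \<in> Fs i" using Suc.IH[OF kl Suc.prems(2) dec_props(2)[OF d i(1)] Suc.prems(4) i(2) Suc.prems(6,7)] .
    then show ?thesis using dec_props(1)[OF d] i by blast
  qed
qed

lemma down: "k \<le> j \<Longrightarrow> j \<le> l \<Longrightarrow> E \<in> L k \<Longrightarrow> F \<in> L l \<Longrightarrow> E \<subseteq> F \<Longrightarrow> \<exists>G\<in>L j. E \<subseteq> G"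
proof (induction l arbitrary: F)
  case 0
  then show ?case by auto
next
  case (Suc l)
  show ?case
  proof (cases "j = Suc l")
    case True
    then show ?thesis using Suc.prems by blast
  next
    case False
    then have jl: "j \<le> l" using Suc.prems by simp
    obtain Fs R where d: "decomp (nseq (Suc l)) (r (Suc l)) (L l) F Fs R" using dec Suc.prems by blast
    have fE: "finite E" "E \<noteq> {}" using Lev_fin(1)[OF Suc.prems(3)] Lev_ne[OF Suc.prems(3)] by auto
    define x where "x = Max E"
    have xE: "x \<in> E" using fE x_def by simp
    obtain i where i: "i < nseq (Suc l)" "x \<in> Fs i" using dec_props(1)[OF d] Suc.prems xE by blast
    have "E \<subseteq> Fs i"
    proof
      fix y assume y: "y \<in> E"
      have "y \<le> x" using fE y x_def by simp
      then show "y \<in> Fs i"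
      proof (cases "y = x")
        case True then show ?thesis using i by simp
      next
        case False
        then have "y < x" using \<open>y \<le> x\<close> by simp
        then show ?thesis using IS[of k l E "Fs i" x y] Suc.prems dec_props(2)[OF d i(1)] i xE y jl by simp
      qed
    qed
    then show ?thesis using Suc.IH[OF Suc.prems(1) jl Suc.prems(3) dec_props(2)[OF d i(1)]] by blast
  qed
qed

lemma up: "E \<in> L k \<Longrightarrow> \<exists>F\<in>L (Suc k). E \<subseteq> F"
proof -
  assume E: "E \<in> L k"
  have fE: "finite E" using Lev_fin(1)[OF E] by auto
  obtain y where y: "y \<notin> E" using ex_new_if_finite[OF inf_univ fE] by blast
  obtain H where H: "H \<in> FF" "insert y E \<subseteq> H" using cofinal[of "insert y E"] fE by auto
  obtain k' where k': "H \<in> L k'" using FF_Lev H by blast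
  have "E \<subset> H" using H y by auto
  then have "card E < card H" using Lev_fin(1)[OF k'] by (simp add: psubset_card_mono)
  then have "m k < m k'" using Lev_fin(2)[OF E] Lev_fin(2)[OF k'] by simp
  then have "k < k'" using strict_mono_less[OF m_mono] by simp
  have EH: "E \<subseteq> H" using H by auto
  show ?thesis by (rule down[OF _ _ E k' EH]) (use \<open>k < k'\<close> in auto)
qed

lemma up': "E \<in> L k \<Longrightarrow> k \<le> j \<Longrightarrow> \<exists>F\<in>L j. E \<subseteq> F"
proof (induction j)
  case 0
  then show ?case by auto
next
  case (Suc j)
  show ?case
  proof (cases "k = Suc j")
    case True then show ?thesis using Suc.prems by auto
  next
    case False
    then obtain F where "F \<in> L j" "E \<subseteq> F" using Suc by auto
    then show ?thesis using up[of F j] by blast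
  qed
qed

lemma down_pt: "k \<le> l \<Longrightarrow> H \<in> L l \<Longrightarrow> x \<in> H \<Longrightarrow> \<exists>G\<in>L k. x \<in> G"
proof (induction l arbitrary: H)
  case 0
  then show ?case by auto
next
  case (Suc l)
  show ?case
  proof (cases "k = Suc l")
    case True then show ?thesis using Suc.prems by auto
  next
    case False
    then have kl: "k \<le> l" using Suc.prems by simp
    obtain Fs R where d: "decomp (nseq (Suc l)) (r (Suc l)) (L l) H Fs R" using dec Suc.prems by blast
    obtain i where i: "i < nseq (Suc l)" "x \<in> Fs i" using dec_props(1)[OF d] Suc.prems by blast
    then show ?thesis using Suc.IH[OF kl dec_props(2)[OF d i(1)]] by blast
  qed
qed

lemma exists_lev: "\<exists>G\<in>L k. x \<in> G"
proof -
  obtain H where H: "H \<in> FF" "{x} \<subseteq> H" using cofinal[of "{x}"] by auto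
  obtain k' where k': "H \<in> L k'" using FF_Lev H by blast
  show ?thesis
  proof (cases "k' \<le> k")
    case True
    then show ?thesis using up'[OF k' True] H by blast
  next
    case False
    then show ?thesis using down_pt[of k k' H x] k' H by simp
  qed
qed

lemma rho_le: "rho m FF x y \<le> k \<longleftrightarrow> (\<exists>F\<in>L k. x \<in> F \<and> y \<in> F)"
proof
  assume "\<exists>F\<in>L k. x \<in> F \<and> y \<in> F"
  then show "rho m FF x y \<le> k" unfolding rho_def by (rule Least_le)
next
  assume a: "rho m FF x y \<le> k"
  obtain H where H: "H \<in> FF" "{x,y} \<subseteq> H" using cofinal[of "{x,y}"] by auto
  obtain k' where k': "H \<in> L k'" using FF_Lev H by blast
  have "\<exists>F\<in>L (rho m FF x y). x \<in> F \<and> y \<in> F" unfolding rho_def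
    by (rule LeastI[of _ k']) (use H k' in auto)
  then obtain F where F: "F \<in> L (rho m FF x y)" "x \<in> F" "y \<in> F" by blast
  then show "\<exists>F\<in>L k. x \<in> F \<and> y \<in> F" using up'[OF F(1) a] by blast
qed

lemma norm_pos: "x \<in> G \<Longrightarrow> G \<in> L k \<Longrightarrow> norm_at m FF x k = card {y \<in> G. y < x}"
proof -
  assume xG: "x \<in> G" and G: "G \<in> L k"
  have "{y. y < x \<and> rho m FF x y \<le> k} = {y \<in> G. y < x}"
  proof (rule set_eqI, rule iffI)
    fix y assume "y \<in> {y. y < x \<and> rho m FF x y \<le> k}"
    then obtain H where "H \<in> L k" "x \<in> H" "y \<in> H" "y < x" using rho_le by auto
    then show "y \<in> {y \<in> G. y < x}" using coh[of G k H x y] xG G by auto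
  next
    fix y assume "y \<in> {y \<in> G. y < x}"
    then show "y \<in> {y. y < x \<and> rho m FF x y \<le> k}" using rho_le xG G by auto
  qed
  then show ?thesis unfolding norm_at_def by simp
qed


lemma DV:
  assumes d: "decomp (nseq (Suc k)) (r (Suc k)) (L k) F Fs R" and i: "i < nseq (Suc k)" and x: "x \<in> Fs i - R"
  shows "card {y\<in>F. y<x} = r (Suc k) + i * (m k - r (Suc k)) + (card {y\<in>Fs i. y<x} - r (Suc k))"
    and "r (Suc k) \<le> card {y\<in>Fs i. y<x}" and "card {y\<in>Fs i. y<x} < m k"
proof -
  let ?N = "nseq (Suc k)" and ?rr = "r (Suc k)" and ?b = "m k - r (Suc k)"
  have finj: "\<And>j. j < ?N \<Longrightarrow> finite (Fs j)" using dec_props(2)[OF d] Lev_fin(1) by blast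
  have cardj: "\<And>j. j < ?N \<Longrightarrow> card (Fs j) = m k" using dec_props(2)[OF d] Lev_fin(2) by blast
  have Rj: "\<And>j. j < ?N \<Longrightarrow> R \<subseteq> Fs j" using dec_props(3)[OF d] by blast
  have finR: "finite R" using finj[OF i] Rj[OF i] finite_subset by blast
  have cR: "card R = ?rr" using dec_props(4)[OF d] .
  let ?S = "{y\<in>Fs i. y<x}"
  have RS: "R \<subseteq> ?S" using Rj[OF i] dec_props(6)[OF d i _ x] by blast
  have finS: "finite ?S" using finj[OF i] by simp
  show "?rr \<le> card ?S" using card_mono[OF finS RS] cR by simp
  have "?S \<subset> Fs i" using x by auto
  then have "card ?S < card (Fs i)" using finj[OF i] psubset_card_mono by blast
  then show "card ?S < m k" using cardj[OF i] by simp
  have eq: "{y\<in>F. y<x} = R \<union> ((\<Union>j<i. Fs j - R) \<union> (?S - R))"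
  proof (rule set_eqI, rule iffI)
    fix y assume y: "y \<in> {y\<in>F. y<x}"
    then obtain j where j: "j < ?N" "y \<in> Fs j" using dec_props(1)[OF d] by blast
    show "y \<in> R \<union> ((\<Union>j<i. Fs j - R) \<union> (?S - R))"
    proof (cases "y \<in> R")
      case True then show ?thesis by simp
    next
      case False
      have "\<not> i < j" using dec_props(7)[OF d _ j(1) x, of y] j False y by auto
      then have "j < i \<or> j = i" by auto
      then show ?thesis using j y False by auto
    qed
  next
    fix y assume y: "y \<in> R \<union> ((\<Union>j<i. Fs j - R) \<union> (?S - R))"
    have FF: "\<And>j. j < ?N \<Longrightarrow> Fs j \<subseteq> F" using dec_props(1)[OF d] by blast
    show "y \<in> {y\<in>F. y<x}"
    proof (cases "y \<in> R")
      case True then show ?thesis using dec_props(8)[OF d] dec_props(6)[OF d i _ x] by blast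
    next
      case False
      then consider "\<exists>j<i. y \<in> Fs j - R" | "y \<in> ?S - R" using y by blast
      then show ?thesis
      proof cases
        case 1
        then obtain j where j: "j < i" "y \<in> Fs j - R" by blast
        have "y < x" using dec_props(7)[OF d j(1) i j(2) x] .
        then show ?thesis using FF[of j] j i by auto
      next
        case 2 then show ?thesis using FF[OF i] by auto
      qed
    qed
  qed
  have c1: "card (\<Union>j<i. Fs j - R) = i * ?b"
  proof -
    have "card (\<Union>j<i. Fs j - R) = (\<Sum>j<i. card (Fs j - R))"
    proof (rule card_UN_disjoint)
      show "finite {..<i}" by simp
      show "\<forall>j\<in>{..<i}. finite (Fs j - R)" using finj i by auto
      show "\<forall>j\<in>{..<i}. \<forall>j'\<in>{..<i}. j \<noteq> j' \<longrightarrow> (Fs j - R) \<inter> (Fs j' - R) = {}"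
      proof (intro ballI impI)
        fix j j' assume "j \<in> {..<i}" "j' \<in> {..<i}" "j \<noteq> j'"
        then have "Fs j \<inter> Fs j' = R" using dec_props(5)[OF d, of j j'] i by simp
        then show "(Fs j - R) \<inter> (Fs j' - R) = {}" by blast
      qed
    qed
    also have "\<dots> = (\<Sum>j<i. ?b)"
    proof (rule sum.cong)
      fix j assume "j \<in> {..<i}"
      then have j: "j < ?N" using i by simp
      show "card (Fs j - R) = ?b" using card_Diff_subset[OF finR Rj[OF j]] cardj[OF j] cR by simp
    qed simp
    finally show ?thesis by simp
  qed
  have c2: "card (?S - R) = card ?S - ?rr" using card_Diff_subset[OF finR RS] cR by simp
  have fU: "finite (\<Union>j<i. Fs j - R)" using finj i by auto
  have "card {y\<in>F. y<x} = card R + card ((\<Union>j<i. Fs j - R) \<union> (?S - R))"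
    unfolding eq by (rule card_Un_disjoint) (use finR fU finS in auto)
  also have "card ((\<Union>j<i. Fs j - R) \<union> (?S - R)) = card (\<Union>j<i. Fs j - R) + card (?S - R)"
  proof (rule card_Un_disjoint)
    show "(\<Union>j<i. Fs j - R) \<inter> (?S - R) = {}"
    proof (rule ccontr)
      assume "(\<Union>j<i. Fs j - R) \<inter> (?S - R) \<noteq> {}"
      then obtain y j where "j < i" "y \<in> Fs j" "y \<notin> R" "y \<in> Fs i" by blast
      moreover have "Fs j \<inter> Fs i = R" using dec_props(5)[OF d, of j i] \<open>j < i\<close> i by simp
      ultimately show False by blast
    qed
  qed (use fU finS in auto)
  finally show "card {y\<in>F. y<x} = ?rr + i * ?b + (card ?S - ?rr)" using c1 c2 cR by simp
qed

lemma DR: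
  assumes d: "decomp (nseq (Suc k)) (r (Suc k)) (L k) F Fs R" and x: "x \<in> R"
  shows "card {y\<in>F. y<x} < r (Suc k)"
proof -
  have n0: "0 < nseq (Suc k)" using nseq2[of k] by simp
  have finR: "finite R" using dec_props(3)[OF d n0] dec_props(2)[OF d n0] Lev_fin(1) finite_subset by blast
  have sub: "{y\<in>F. y<x} \<subseteq> R - {x}"
  proof
    fix y assume y: "y \<in> {y\<in>F. y<x}"
    then obtain j where j: "j < nseq (Suc k)" "y \<in> Fs j" using dec_props(1)[OF d] by blast
    have "y \<in> R" using dec_props(6)[OF d j(1) x, of y] y j by force
    then show "y \<in> R - {x}" using y by auto
  qed
  have "card {y\<in>F. y<x} \<le> card (R - {x})" using card_mono[OF _ sub] finR by simp
  also have "\<dots> < card R" using finR x card_gt_0_iff[of R] by auto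
  finally show ?thesis using dec_props(4)[OF d] by simp
qed

definition Xf :: "nat \<Rightarrow> nat \<Rightarrow> int" where
  "Xf k p = (if p < r k then -1 else int ((p - r k) div (m (k - 1) - r k)))"

lemma val:
  assumes F: "F \<in> L (Suc k)" and xF: "x \<in> F" and d: "decomp (nseq (Suc k)) (r (Suc k)) (L k) F Fs R"
    and v: "(x \<in> R \<and> v = -1) \<or> (\<exists>i<nseq (Suc k). x \<in> Fs i - R \<and> v = int i)"
  shows "v = Xf (Suc k) (norm_at m FF x (Suc k))"
proof -
  have np: "norm_at m FF x (Suc k) = card {y\<in>F. y<x}" using norm_pos[OF xF F] .
  show ?thesis
  proof (cases "x \<in> R \<and> v = -1")
    case True
    then show ?thesis using DR[OF d] np unfolding Xf_def by simp
  next
    case False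
    then obtain i where i: "i < nseq (Suc k)" "x \<in> Fs i - R" "v = int i" using v by blast
    let ?c = "card {y\<in>Fs i. y<x}"
    have e1: "card {y\<in>F. y<x} = r (Suc k) + i * (m k - r (Suc k)) + (?c - r (Suc k))" using DV(1)[OF d i(1,2)] .
    have e2: "r (Suc k) \<le> ?c" "?c < m k" using DV(2,3)[OF d i(1,2)] by auto
    have bpos: "m k - r (Suc k) > 0" using r_less[of k] by simp
    have q: "?c - r (Suc k) < m k - r (Suc k)" using e2 by simp
    have "(i * (m k - r (Suc k)) + (?c - r (Suc k))) div (m k - r (Suc k)) = i"
      using q bpos by (simp add: div_add1_eq[of "i * (m k - r (Suc k))"])
    then show ?thesis using np e1 i(3) unfolding Xf_def by simp
  qed
qed

lemma Xi_formula: "Xi m nseq r FF x (Suc k) = Xf (Suc k) (norm_at m FF x (Suc k))"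
proof -
  obtain F where F: "F \<in> L (Suc k)" "x \<in> F" using exists_lev by blast
  obtain Fs R where d: "decomp (nseq (Suc k)) (r (Suc k)) (L k) F Fs R" using dec[OF F(1)] by blast
  obtain v where v: "(x \<in> R \<and> v = -1) \<or> (\<exists>i<nseq (Suc k). x \<in> Fs i - R \<and> v = int i)"
  proof (cases "x \<in> R")
    case True then show ?thesis using that by blast
  next
    case False
    then obtain i where "i < nseq (Suc k)" "x \<in> Fs i - R" using F(2) dec_props(1)[OF d] by blast
    then show ?thesis using that by blast
  qed
  have vv: "v = Xf (Suc k) (norm_at m FF x (Suc k))" using val[OF F d v] .
  show ?thesis unfolding Xi_def
  proof (simp only: Suc_not_Zero if_False diff_Suc_1, rule the_equality)
    show "\<exists>F\<in>L (Suc k). x \<in> F \<and> (\<exists>Fs R. decomp (nseq (Suc k)) (r (Suc k)) (L k) F Fs R \<and>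
       (x \<in> R \<and> Xf (Suc k) (norm_at m FF x (Suc k)) = - 1 \<or>
        (\<exists>i<nseq (Suc k). x \<in> Fs i - R \<and> Xf (Suc k) (norm_at m FF x (Suc k)) = int i)))"
    proof (rule bexI[OF _ F(1)], rule conjI[OF F(2)], rule exI, rule exI, rule conjI[OF d])
      show "x \<in> R \<and> Xf (Suc k) (norm_at m FF x (Suc k)) = - 1 \<or>
        (\<exists>i<nseq (Suc k). x \<in> Fs i - R \<and> Xf (Suc k) (norm_at m FF x (Suc k)) = int i)"
        using v vv by simp
    qed
  next
    fix w assume "\<exists>F\<in>L (Suc k). x \<in> F \<and> (\<exists>Fs R. decomp (nseq (Suc k)) (r (Suc k)) (L k) F Fs R \<and>
       (x \<in> R \<and> w = - 1 \<or> (\<exists>i<nseq (Suc k). x \<in> Fs i - R \<and> w = int i)))"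
    then obtain F' Fs' R' where h: "F' \<in> L (Suc k)" "x \<in> F'" "decomp (nseq (Suc k)) (r (Suc k)) (L k) F' Fs' R'"
       "(x \<in> R' \<and> w = - 1 \<or> (\<exists>i<nseq (Suc k). x \<in> Fs' i - R' \<and> w = int i))" by blast
    show "w = Xf (Suc k) (norm_at m FF x (Suc k))" by (rule val[OF h(1) h(2) h(3) h(4)])
  qed
qed

lemma Xi_nonneg:
  assumes "Xi m nseq r FF x (Suc k) \<ge> 0"
  shows "r (Suc k) \<le> norm_at m FF x k \<and> norm_at m FF x k < m k"
proof -
  obtain F where F: "F \<in> L (Suc k)" "x \<in> F" using exists_lev by blast
  obtain Fs R where d: "decomp (nseq (Suc k)) (r (Suc k)) (L k) F Fs R" using dec[OF F(1)] by blast
  show ?thesis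
  proof (cases "x \<in> R")
    case True
    then have "Xi m nseq r FF x (Suc k) = -1"
      using val[OF F d, of "-1"] Xi_formula by simp
    then show ?thesis using assms by simp
  next
    case False
    then obtain i where i: "i < nseq (Suc k)" "x \<in> Fs i - R" using F(2) dec_props(1)[OF d] by blast
    have "norm_at m FF x k = card {y\<in>Fs i. y<x}" using norm_pos[of x "Fs i" k] i dec_props(2)[OF d i(1)] by blast
    then show ?thesis using DV(2,3)[OF d i] by simp
  qed
qed


end

lemma ex_sep: "finite (a::(nat\<Rightarrow>int) set) \<Longrightarrow> \<exists>d. \<forall>f\<in>a. \<forall>g\<in>a. f \<noteq> g \<longrightarrow> (\<exists>k<d. f k \<noteq> g k)"
proof -
  assume fa: "finite a"
  let ?T = "(\<lambda>(f,g). LEAST k. f k \<noteq> g k) ` (a \<times> a)"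
  have "finite ?T" using fa by simp
  then obtain d where d: "\<forall>t\<in>?T. t < d" using finite_nat_set_iff_bounded by blast
  show ?thesis
  proof (rule exI[of _ d], intro ballI impI)
    fix f g assume f: "f \<in> a" and g: "g \<in> a" and ne: "f \<noteq> g"
    then have ex: "\<exists>k. f k \<noteq> g k" by (auto simp: fun_eq_iff)
    have "(LEAST k. f k \<noteq> g k) \<in> ?T" using f g by force
    then show "\<exists>k<d. f k \<noteq> g k" using d LeastI_ex[OF ex] by blast
  qed
qed

lemma choose_c:
  fixes V0 V1 :: "nat set"
  assumes fin: "finite V0" "finite V1" and dis: "V0 \<inter> V1 = {}" and cs: "card V0 + card V1 = 2 * n" and n: "n > 0"
  shows "\<exists>c. (c = V0 \<or> c = V1) \<and> card c \<le> n \<and> (\<forall>v\<in>V0 \<union> V1. (v \<in> c \<or> (card c = n \<and> v < Min c)) \<longleftrightarrow> v \<in> c)"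
proof (cases "card V0 < n")
  case True
  then show ?thesis by (intro exI[of _ V0]) auto
next
  case False
  note F1 = False
  show ?thesis
  proof (cases "card V1 < n")
    case True
    then show ?thesis by (intro exI[of _ V1]) auto
  next
    case False
    then have c0: "card V0 = n" and c1: "card V1 = n" using F1 cs by auto
    have ne: "V0 \<noteq> {}" "V1 \<noteq> {}" using c0 c1 n by auto
    let ?mu = "Min (V0 \<union> V1)"
    have mu: "?mu \<in> V0 \<union> V1" using fin ne by (intro Min_in) auto
    have mule: "\<And>v. v \<in> V0 \<union> V1 \<Longrightarrow> ?mu \<le> v" using fin by simp
    show ?thesis
    proof (cases "?mu \<in> V0")
      case True
      have "Min V0 = ?mu" using True fin ne mule by (intro Min_eqI) auto
      then show ?thesis using c0 True dis mule by (intro exI[of _ V0]) (auto, fastforce)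
    next
      case False
      then have mu1: "?mu \<in> V1" using mu by simp
      have "Min V1 = ?mu" using mu1 fin ne mule by (intro Min_eqI) auto
      then show ?thesis using c1 mu1 dis mule by (intro exI[of _ V1]) (auto, fastforce)
    qed
  qed
qed

locale cs2 = cs m nseq r FF for m nseq r :: "nat \<Rightarrow> nat" and FF :: "'a::linorder set set" +
  fixes C :: "nat \<Rightarrow> nat \<Rightarrow> nat set" and n :: nat
  assumes capt: "fully_Delta_capturing m nseq r FF"
    and Cen: "\<forall>k. C k ` {i. 0 < i \<and> i < nseq (Suc k)} = {A. A \<subseteq> {r (Suc k)..<m k} \<and> card A \<le> n}"
begin

abbreviation ee where "ee \<equiv> e_fun m nseq r FF C n"

lemma e_agree:
  assumes "\<forall>k<l. norm_at m FF x k = norm_at m FF y k" "k < l"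
  shows "ee x k = ee y k"
proof (cases k)
  case 0
  then show ?thesis unfolding e_fun_def Let_def Xi_def by simp
next
  case (Suc k')
  have "norm_at m FF x (Suc k') = norm_at m FF y (Suc k')" "norm_at m FF x k' = norm_at m FF y k'"
    using assms Suc by auto
  then show ?thesis unfolding e_fun_def Let_def using Suc Xi_formula by simp
qed

lemma e_Xi0: "Xi m nseq r FF x l = 0 \<Longrightarrow> ee x l = 0"
  unfolding e_fun_def Let_def by simp

lemma e_Xipos: "Xi m nseq r FF x l = int j \<Longrightarrow> j > 0 \<Longrightarrow>
  ee x l = (if norm_at m FF x (l-1) \<in> C (l-1) j \<or> (card (C (l-1) j) = n \<and> norm_at m FF x (l-1) < Min (C (l-1) j))
            then int j else - int j)"
  unfolding e_fun_def Let_def by simp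

lemma e_Xi_abs: "Xi m nseq r FF x l = int j \<Longrightarrow> j > 0 \<Longrightarrow> ee x l = int j \<or> ee x l = - int j"
  using e_Xipos by simp


lemma capt_parts:
  assumes "captured m nseq r FF l N D"
  obtains mm R where "2 \<le> N" "\<forall>j<N. finite (D j) \<and> card (D j) = mm"
    "\<forall>i<N. \<forall>j<N. i \<noteq> j \<longrightarrow> D i \<inter> D j = R"
    "\<forall>j<N. \<forall>a. card R \<le> a \<and> a < mm \<longrightarrow> Xi m nseq r FF (elem_at (<) (D j) a) l = int j"
    "\<forall>i<N. \<forall>j<N. i \<noteq> j \<longrightarrow> (\<forall>a. card R \<le> a \<and> a < mm \<longrightarrow>
            Delta m FF (elem_at (<) (D i) a) (elem_at (<) (D j) a) = l)"
proof -
  note cc = assms[unfolded captured_def]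
  have N: "2 \<le> N" using cc by (rule conjunct1)
  obtain mm R where h: "(\<forall>j<N. finite (D j) \<and> card (D j) = mm) \<and>
        (\<forall>i<N. \<forall>j<N. i \<noteq> j \<longrightarrow> D i \<inter> D j = R) \<and>
        (\<forall>j<N. \<forall>x\<in>R. \<forall>y\<in>D j - R. x < y) \<and>
        (\<forall>i<N. \<forall>j<N. i \<noteq> j \<longrightarrow>
            (\<forall>x\<in>D i - R. \<forall>y\<in>D j - R. x < y) \<or> (\<forall>x\<in>D j - R. \<forall>y\<in>D i - R. x < y)) \<and>
        (\<forall>j<N. \<forall>a<card R. Xi m nseq r FF (elem_at (<) (D j) a) l = -1) \<and>
        (\<forall>j<N. \<forall>a. card R \<le> a \<and> a < mm \<longrightarrow> Xi m nseq r FF (elem_at (<) (D j) a) l = int j) \<and>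
        (\<forall>i<N. \<forall>j<N. i \<noteq> j \<longrightarrow> (\<forall>a. card R \<le> a \<and> a < mm \<longrightarrow>
            Delta m FF (elem_at (<) (D i) a) (elem_at (<) (D j) a) = l))"
    using cc[THEN conjunct2] by (elim exE) (rule that)
  show ?thesis
  proof (rule that[of mm R])
    show "2 \<le> N" by (rule N)
    show "\<forall>j<N. finite (D j) \<and> card (D j) = mm" using h by (rule conjunct1)
    show "\<forall>i<N. \<forall>j<N. i \<noteq> j \<longrightarrow> D i \<inter> D j = R" using h[THEN conjunct2] by (rule conjunct1)
    show "\<forall>j<N. \<forall>a. card R \<le> a \<and> a < mm \<longrightarrow> Xi m nseq r FF (elem_at (<) (D j) a) l = int j"
      using h[THEN conjunct2, THEN conjunct2, THEN conjunct2, THEN conjunct2, THEN conjunct2] by (rule conjunct1)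
    show "\<forall>i<N. \<forall>j<N. i \<noteq> j \<longrightarrow> (\<forall>a. card R \<le> a \<and> a < mm \<longrightarrow>
            Delta m FF (elem_at (<) (D i) a) (elem_at (<) (D j) a) = l)"
      using h[THEN conjunct2, THEN conjunct2, THEN conjunct2, THEN conjunct2, THEN conjunct2] by (rule conjunct2)
  qed
qed

lemma capt_get:
  assumes "S \<subseteq> {A. finite A}" "\<not> countable S"
  shows "infinite {l. 0 < l \<and> (\<exists>D. (\<forall>j<nseq l. D j \<in> S) \<and> inj_on D {..<nseq l} \<and>
                                  captured m nseq r FF l (nseq l) D)}"
  using capt assms unfolding fully_Delta_capturing_def by blast

lemma elem_single: "elem_at (<) {a} 0 = (a::'a)"
proof -
  have e: "elem_at (<) {a} (card {z\<in>{a}. z < a}) = a" by (rule EA1_lin) auto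
  have h: "card {z\<in>{a}. z < a} = 0" by simp
  from e show ?thesis unfolding h .
qed

lemma range_unc:
  assumes unc: "\<not> countable (UNIV::'a set)"
  shows "\<not> countable (range ee)"
proof
  assume cr: "countable (range ee)"
  have "\<exists>f. \<not> countable (ee -` {f})"
  proof (rule ccontr)
    assume "\<not> (\<exists>f. \<not> countable (ee -` {f}))"
    then have "\<forall>f. countable (ee -` {f})" by blast
    then have "countable (\<Union>f\<in>range ee. ee -` {f})" using cr by (intro countable_UN) auto
    moreover have "(\<Union>f\<in>range ee. ee -` {f}) = UNIV" by auto
    ultimately show False using unc by simp
  qed
  then obtain f where Z: "\<not> countable (ee -` {f})" by blast
  let ?Z = "ee -` {f}"
  let ?S = "(\<lambda>\<alpha>. {\<alpha>}) ` ?Z"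
  have S1: "?S \<subseteq> {A. finite A}" by auto
  have S2: "\<not> countable ?S"
  proof
    assume "countable ?S"
    then have "countable ?Z" using countable_image_inj_on[of "\<lambda>\<alpha>. {\<alpha>}" ?Z] by (auto simp: inj_on_def)
    then show False using Z by simp
  qed
  have "infinite {l. 0 < l \<and> (\<exists>D. (\<forall>j<nseq l. D j \<in> ?S) \<and> inj_on D {..<nseq l} \<and> captured m nseq r FF l (nseq l) D)}"
    by (rule capt_get[OF S1 S2])
  then have "{l. 0 < l \<and> (\<exists>D. (\<forall>j<nseq l. D j \<in> ?S) \<and> inj_on D {..<nseq l} \<and> captured m nseq r FF l (nseq l) D)} \<noteq> {}"
    by (rule infinite_imp_nonempty)
  then obtain l where "l \<in> {l. 0 < l \<and> (\<exists>D. (\<forall>j<nseq l. D j \<in> ?S) \<and> inj_on D {..<nseq l} \<and> captured m nseq r FF l (nseq l) D)}"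
    by (rule ex_in_conv[THEN iffD2, THEN exE])
  then have "0 < l \<and> (\<exists>D. (\<forall>j<nseq l. D j \<in> ?S) \<and> inj_on D {..<nseq l} \<and> captured m nseq r FF l (nseq l) D)"
    unfolding mem_Collect_eq .
  then obtain D where D1: "\<forall>j<nseq l. D j \<in> ?S" and D2: "inj_on D {..<nseq l}" and D3: "captured m nseq r FF l (nseq l) D"
    by blast
  obtain mm R where c0: "2 \<le> nseq l" and c1: "\<forall>j<nseq l. finite (D j) \<and> card (D j) = mm"
    and c2: "\<forall>i<nseq l. \<forall>j<nseq l. i \<noteq> j \<longrightarrow> D i \<inter> D j = R"
    and c3: "\<forall>j<nseq l. \<forall>a. card R \<le> a \<and> a < mm \<longrightarrow> Xi m nseq r FF (elem_at (<) (D j) a) l = int j"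
    and c4: "\<forall>i<nseq l. \<forall>j<nseq l. i \<noteq> j \<longrightarrow> (\<forall>a. card R \<le> a \<and> a < mm \<longrightarrow>
            Delta m FF (elem_at (<) (D i) a) (elem_at (<) (D j) a) = l)"
    by (rule capt_parts[OF D3])
  have n0: "0 < nseq l" and n1: "1 < nseq l" using c0 by auto
  obtain a0 where a0: "a0 \<in> ?Z" "D 0 = {a0}" using D1 n0 by blast
  obtain a1 where a1: "a1 \<in> ?Z" "D 1 = {a1}" using D1 n1 by blast
  have "D 0 \<noteq> D 1"
  proof
    assume e: "D 0 = D 1"
    have "(0::nat) = 1" using inj_onD[OF D2 e] n0 n1 by simp
    then show False by simp
  qed
  then have ne: "a0 \<noteq> a1" using a0 a1 by auto
  have "D 0 \<inter> D 1 = R" using c2 n0 n1 by simp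
  then have R: "R = {}" using a0(2) a1(2) ne by auto
  have "card (D 0) = mm" using c1 n0 by simp
  then have mm: "mm = 1" using a0(2) by simp
  have "Xi m nseq r FF (elem_at (<) (D 0) 0) l = int 0" using c3 n0 R mm by simp
  then have x0: "Xi m nseq r FF a0 l = 0" using a0(2) elem_single by simp
  have "Xi m nseq r FF (elem_at (<) (D 1) 0) l = int 1" using c3 n1 R mm by simp
  then have x1: "Xi m nseq r FF a1 l = 1" using a1(2) elem_single by simp
  have "ee a0 l = 0" using e_Xi0[OF x0] .
  moreover have "ee a1 l = 1 \<or> ee a1 l = -1" using e_Xi_abs[of a1 l 1] x1 by simp
  moreover have "ee a0 = ee a1" using a0 a1 by simp
  ultimately show False by auto
qed

end
context cs2
begin

lemma main:
  assumes n0: "0 < n"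
    and A1: "\<A> \<subseteq> {a. a \<subseteq> range ee \<and> finite a \<and> card a = 2 * n}"
    and A2: "\<not> countable \<A>"
    and A3: "\<forall>a\<in>\<A>. \<forall>b\<in>\<A>. a \<noteq> b \<longrightarrow> a \<inter> b = {}"
  shows "\<exists>a\<in>\<A>. \<exists>b\<in>\<A>. a \<noteq> b \<and>
             (\<forall>i<2 * n. lex_less (elem_at lex_less a i) (elem_at lex_less b i) \<longleftrightarrow> \<tau> i = (0::nat))"
proof -
  have Ar: "\<And>a. a \<in> \<A> \<Longrightarrow> a \<subseteq> range ee" and Af: "\<And>a. a \<in> \<A> \<Longrightarrow> finite a"
    and Ac: "\<And>a. a \<in> \<A> \<Longrightarrow> card a = 2 * n" using A1 by auto
  define \<sigma> where "\<sigma> f = (SOME \<alpha>. ee \<alpha> = f)" for f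
  have \<sigma>: "\<And>f. f \<in> range ee \<Longrightarrow> ee (\<sigma> f) = f" unfolding \<sigma>_def by (auto intro: someI)
  define s where "s a = \<sigma> ` a" for a
  have s_img: "\<And>a. a \<in> \<A> \<Longrightarrow> ee ` s a = a"
  proof -
    fix a assume a: "a \<in> \<A>"
    have *: "\<And>f. f \<in> a \<Longrightarrow> ee (\<sigma> f) = f" using \<sigma> Ar[OF a] by blast
    have "(\<lambda>f. ee (\<sigma> f)) ` a = (\<lambda>f. f) ` a" by (rule image_cong) (use * in auto)
    then show "ee ` s a = a" unfolding s_def image_image by simp
  qed
  have s_fin: "\<And>a. a \<in> \<A> \<Longrightarrow> finite (s a)" unfolding s_def using Af by simp
  have s_inj: "\<And>a. a \<in> \<A> \<Longrightarrow> inj_on ee (s a)"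
  proof -
    fix a assume a: "a \<in> \<A>"
    show "inj_on ee (s a)"
    proof (rule inj_onI)
      fix x y assume x: "x \<in> s a" and y: "y \<in> s a" and e: "ee x = ee y"
      obtain f where f: "f \<in> a" "x = \<sigma> f" using x unfolding s_def by blast
      obtain g where g: "g \<in> a" "y = \<sigma> g" using y unfolding s_def by blast
      have "ee (\<sigma> f) = f" "ee (\<sigma> g) = g" using \<sigma> Ar[OF a] f(1) g(1) by blast+
      then have "f = g" using e f(2) g(2) by simp
      then show "x = y" using f g by simp
    qed
  qed
  have s_card: "\<And>a. a \<in> \<A> \<Longrightarrow> card (s a) = 2 * n"
    using card_image[OF s_inj] s_img Ac by metis
  have s_injA: "inj_on s \<A>"
  proof (rule inj_onI)
    fix a b assume "a \<in> \<A>" "b \<in> \<A>" "s a = s b"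
    then show "a = b" using s_img by metis
  qed
  define dd where "dd a = (SOME d. \<forall>f\<in>a. \<forall>g\<in>a. f \<noteq> g \<longrightarrow> (\<exists>k<d. f k \<noteq> g k))" for a :: "(nat \<Rightarrow> int) set"
  have dd: "\<And>a. a \<in> \<A> \<Longrightarrow> \<forall>f\<in>a. \<forall>g\<in>a. f \<noteq> g \<longrightarrow> (\<exists>k<dd a. f k \<noteq> g k)"
  proof -
    fix a assume a: "a \<in> \<A>"
    show "\<forall>f\<in>a. \<forall>g\<in>a. f \<noteq> g \<longrightarrow> (\<exists>k<dd a. f k \<noteq> g k)"
      unfolding dd_def by (rule someI_ex[OF ex_sep[OF Af[OF a]]])
  qed
  define kk where "kk a = (SOME k. \<exists>F\<in>L k. s a \<subseteq> F)" for a
  have kk: "\<And>a. a \<in> \<A> \<Longrightarrow> \<exists>F\<in>L (kk a). s a \<subseteq> F"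
  proof -
    fix a assume a: "a \<in> \<A>"
    obtain F where F: "F \<in> FF" "s a \<subseteq> F" using cofinal s_fin[OF a] by blast
    obtain k where "F \<in> L k" using FF_Lev F(1) by blast
    then have "\<exists>k F. F \<in> L k \<and> s a \<subseteq> F" using F by blast
    then have "\<exists>k. \<exists>F\<in>L k. s a \<subseteq> F" by blast
    then show "\<exists>F\<in>L (kk a). s a \<subseteq> F" unfolding kk_def by (rule someI_ex)
  qed
  define AK where "AK K = {a\<in>\<A>. dd a \<le> K \<and> kk a \<le> K}" for K
  have "\<exists>K. \<not> countable (AK K)"
  proof (rule ccontr)
    assume "\<not> (\<exists>K. \<not> countable (AK K))"
    then have "\<forall>K. countable (AK K)" by blast
    then have "countable (\<Union>K. AK K)" by (intro countable_UN) auto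
    moreover have "\<A> \<subseteq> (\<Union>K. AK K)"
    proof
      fix a assume "a \<in> \<A>"
      then have "a \<in> AK (max (dd a) (kk a))" unfolding AK_def by simp
      then show "a \<in> (\<Union>K. AK K)" by blast
    qed
    ultimately show False using A2 countable_subset by blast
  qed
  then obtain K where AK: "\<not> countable (AK K)" by blast
  have AKsub: "AK K \<subseteq> \<A>" unfolding AK_def by auto
  have AKd: "\<And>a. a \<in> AK K \<Longrightarrow> dd a \<le> K" and AKk: "\<And>a. a \<in> AK K \<Longrightarrow> kk a \<le> K" unfolding AK_def by auto
  let ?S = "s ` AK K"
  have S1: "?S \<subseteq> {A. finite A}" using s_fin AKsub by auto
  have S2: "\<not> countable ?S"
  proof
    assume "countable ?S"
    then have "countable (AK K)" using countable_image_inj_on inj_on_subset[OF s_injA AKsub] by blast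
    then show False using AK by simp
  qed
  let ?Ls = "{l. 0 < l \<and> (\<exists>D. (\<forall>j<nseq l. D j \<in> ?S) \<and> inj_on D {..<nseq l} \<and> captured m nseq r FF l (nseq l) D)}"
  have "infinite ?Ls" by (rule capt_get[OF S1 S2])
  then have "\<forall>m. \<exists>n>m. n \<in> ?Ls" unfolding infinite_nat_iff_unbounded .
  then have "\<exists>n>K. n \<in> ?Ls" by (rule allE)
  then obtain l where lK': "K < l \<and> l \<in> ?Ls" by (rule exE)
  have lK: "K < l" using lK' by (rule conjunct1)
  have lL: "0 < l \<and> (\<exists>D. (\<forall>j<nseq l. D j \<in> ?S) \<and> inj_on D {..<nseq l} \<and> captured m nseq r FF l (nseq l) D)"
    using lK'[THEN conjunct2] unfolding mem_Collect_eq .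
  have l0: "0 < l" using lL by (rule conjunct1)
  obtain D where DD: "(\<forall>j<nseq l. D j \<in> ?S) \<and> inj_on D {..<nseq l} \<and> captured m nseq r FF l (nseq l) D"
    using lL[THEN conjunct2] by (rule exE)
  have D1: "\<forall>j<nseq l. D j \<in> ?S" using DD by (rule conjunct1)
  have D2: "inj_on D {..<nseq l}" using DD[THEN conjunct2] by (rule conjunct1)
  have D3: "captured m nseq r FF l (nseq l) D" using DD[THEN conjunct2] by (rule conjunct2)
  obtain mm R where c0: "2 \<le> nseq l" and c1: "\<forall>j<nseq l. finite (D j) \<and> card (D j) = mm"
    and c2: "\<forall>i<nseq l. \<forall>j<nseq l. i \<noteq> j \<longrightarrow> D i \<inter> D j = R"
    and c3: "\<forall>j<nseq l. \<forall>a. card R \<le> a \<and> a < mm \<longrightarrow> Xi m nseq r FF (elem_at (<) (D j) a) l = int j"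
    and c4: "\<forall>i<nseq l. \<forall>j<nseq l. i \<noteq> j \<longrightarrow> (\<forall>a. card R \<le> a \<and> a < mm \<longrightarrow>
            Delta m FF (elem_at (<) (D i) a) (elem_at (<) (D j) a) = l)"
    by (rule capt_parts[OF D3])
  have N0: "0 < nseq l" and N1: "1 < nseq l" using c0 by auto
  define aa where "aa j = (SOME a. a \<in> AK K \<and> D j = s a)" for j
  have aa: "\<And>j. j < nseq l \<Longrightarrow> aa j \<in> AK K \<and> D j = s (aa j)"
  proof -
    fix j assume j: "j < nseq l"
    then have "\<exists>a. a \<in> AK K \<and> D j = s a" using D1 by blast
    then show "aa j \<in> AK K \<and> D j = s (aa j)" unfolding aa_def by (rule someI_ex)
  qed
  have aaA: "\<And>j. j < nseq l \<Longrightarrow> aa j \<in> \<A>" using aa AKsub by blast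
  have Dj: "\<And>j. j < nseq l \<Longrightarrow> D j = s (aa j)" using aa by blast
  have aa_ne: "\<And>i j. i < nseq l \<Longrightarrow> j < nseq l \<Longrightarrow> i \<noteq> j \<Longrightarrow> aa i \<noteq> aa j"
  proof
    fix i j assume i: "i < nseq l" and j: "j < nseq l" and ne: "i \<noteq> j" and e: "aa i = aa j"
    then have "D i = D j" using Dj by simp
    then have "i = j" using inj_onD[OF D2] i j by simp
    then show False using ne by simp
  qed
  have D_dis: "\<And>i j. i < nseq l \<Longrightarrow> j < nseq l \<Longrightarrow> i \<noteq> j \<Longrightarrow> D i \<inter> D j = {}"
  proof -
    fix i j assume i: "i < nseq l" and j: "j < nseq l" and ne: "i \<noteq> j"
    have dis: "aa i \<inter> aa j = {}" using A3 aaA[OF i] aaA[OF j] aa_ne[OF i j ne] by blast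
    show "D i \<inter> D j = {}"
    proof (rule ccontr)
      assume "D i \<inter> D j \<noteq> {}"
      then obtain y where "y \<in> D i" "y \<in> D j" by blast
      then have "ee y \<in> aa i" "ee y \<in> aa j" using Dj[OF i] Dj[OF j] s_img[OF aaA[OF i]] s_img[OF aaA[OF j]] by blast+
      then show False using dis by blast
    qed
  qed
  have R: "R = {}" using c2 N0 N1 D_dis[OF N0 N1] by simp
  have "card (D 0) = mm" using c1 N0 by simp
  then have mm: "mm = 2 * n" using Dj[OF N0] s_card[OF aaA[OF N0]] by simp
  define x where "x j a = elem_at (<) (D j) a" for j a
  have Xi_x: "\<And>j a. j < nseq l \<Longrightarrow> a < 2 * n \<Longrightarrow> Xi m nseq r FF (x j a) l = int j"
    unfolding x_def using c3 R mm by simp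
  have Delta_x: "\<And>i j a. i < nseq l \<Longrightarrow> j < nseq l \<Longrightarrow> i \<noteq> j \<Longrightarrow> a < 2 * n \<Longrightarrow> Delta m FF (x i a) (x j a) = l"
    unfolding x_def using c4 R mm by simp
  have norm_eq: "\<And>i j a. i < nseq l \<Longrightarrow> j < nseq l \<Longrightarrow> a < 2 * n \<Longrightarrow>
      \<forall>k<l. norm_at m FF (x i a) k = norm_at m FF (x j a) k"
  proof -
    fix i j a assume i: "i < nseq l" and j: "j < nseq l" and a: "a < 2 * n"
    show "\<forall>k<l. norm_at m FF (x i a) k = norm_at m FF (x j a) k"
    proof (cases "i = j")
      case True then show ?thesis by simp
    next
      case False
      have "Delta m FF (x i a) (x j a) = l" using Delta_x[OF i j False a] .
      then show ?thesis unfolding Delta_def using not_less_Least by blast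
    qed
  qed
  have e_eq: "\<And>i j a. i < nseq l \<Longrightarrow> j < nseq l \<Longrightarrow> a < 2 * n \<Longrightarrow> \<forall>k<l. ee (x i a) k = ee (x j a) k"
    using e_agree norm_eq by blast
  have Dfin: "\<And>j. j < nseq l \<Longrightarrow> finite (D j)" and Dcard: "\<And>j. j < nseq l \<Longrightarrow> card (D j) = 2 * n"
    using c1 mm by auto
  have x_in: "\<And>j a. j < nseq l \<Longrightarrow> a < 2 * n \<Longrightarrow> x j a \<in> D j \<and> card {z\<in>D j. z < x j a} = a"
    unfolding x_def using EA2_lin Dfin Dcard by metis
  have x_inj: "\<And>j a b. j < nseq l \<Longrightarrow> a < 2 * n \<Longrightarrow> b < 2 * n \<Longrightarrow> x j a = x j b \<Longrightarrow> a = b"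
    using x_in by metis
  have D_img: "\<And>j. j < nseq l \<Longrightarrow> D j = x j ` {..<2 * n}"
  proof -
    fix j assume j: "j < nseq l"
    show "D j = x j ` {..<2 * n}"
    proof
      show "x j ` {..<2 * n} \<subseteq> D j" using x_in[OF j] by auto
      show "D j \<subseteq> x j ` {..<2 * n}"
      proof
        fix y assume y: "y \<in> D j"
        let ?q = "card {z\<in>D j. z < y}"
        have "{z\<in>D j. z < y} \<subset> D j" using y by auto
        then have q: "?q < 2 * n" using Dfin[OF j] Dcard[OF j] psubset_card_mono by metis
        have "x j ?q = y" unfolding x_def using EA1_lin[OF Dfin[OF j] y] .
        then show "y \<in> x j ` {..<2 * n}" using q by force
      qed
    qed
  qed
  define f where "f j a = ee (x j a)" for j a
  have aa_img: "\<And>j. j < nseq l \<Longrightarrow> aa j = f j ` {..<2 * n}"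
  proof -
    fix j assume j: "j < nseq l"
    have "aa j = ee ` D j" using s_img[OF aaA[OF j]] Dj[OF j] by simp
    also have "\<dots> = f j ` {..<2 * n}" unfolding D_img[OF j] f_def image_image by simp
    finally show "aa j = f j ` {..<2 * n}" .
  qed
  have f_inj: "\<And>j. j < nseq l \<Longrightarrow> inj_on (f j) {..<2 * n}"
  proof -
    fix j assume j: "j < nseq l"
    show "inj_on (f j) {..<2 * n}"
    proof (rule inj_onI)
      fix a b assume a: "a \<in> {..<2 * n}" and b: "b \<in> {..<2 * n}" and e: "f j a = f j b"
      have "x j a \<in> s (aa j)" "x j b \<in> s (aa j)" using x_in[OF j] a b Dj[OF j] by auto
      then have "x j a = x j b" using inj_onD[OF s_inj[OF aaA[OF j]]] e unfolding f_def by blast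
      then show "a = b" using x_inj[OF j] a b by simp
    qed
  qed
  obtain F0 where F0: "F0 \<in> L (kk (aa 0))" "s (aa 0) \<subseteq> F0" using kk[OF aaA[OF N0]] by blast
  have "kk (aa 0) \<le> K" using AKk aa[OF N0] by blast
  then have kkl: "kk (aa 0) \<le> l - 1" using lK by simp
  obtain G where G: "G \<in> L (l-1)" "F0 \<subseteq> G" using up'[OF F0(1) kkl] by blast
  have D0G: "D 0 \<subseteq> G" using Dj[OF N0] F0(2) G(2) by blast
  have Gfin: "finite G" using Lev_fin(1)[OF G(1)] .
  define \<nu> where "\<nu> a = norm_at m FF (x 0 a) (l-1)" for a
  have \<nu>_G: "\<And>a. a < 2 * n \<Longrightarrow> \<nu> a = card {y\<in>G. y < x 0 a}"
  proof -
    fix a assume a: "a < 2 * n"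
    have "x 0 a \<in> G" using x_in[OF N0 a] D0G by blast
    then show "\<nu> a = card {y\<in>G. y < x 0 a}" unfolding \<nu>_def by (rule norm_pos[OF _ G(1)])
  qed
  have x0G: "\<And>a. a < 2 * n \<Longrightarrow> x 0 a = elem_at (<) G (\<nu> a)"
  proof -
    fix a assume a: "a < 2 * n"
    have "x 0 a \<in> G" using x_in[OF N0 a] D0G by blast
    from EA1_lin[OF Gfin this] show "x 0 a = elem_at (<) G (\<nu> a)" using \<nu>_G[OF a] by simp
  qed
  have \<nu>_inj: "\<And>a b. a < 2 * n \<Longrightarrow> b < 2 * n \<Longrightarrow> \<nu> a = \<nu> b \<Longrightarrow> a = b"
  proof -
    fix a b assume a: "a < 2 * n" and b: "b < 2 * n" and e: "\<nu> a = \<nu> b"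
    have "x 0 a = x 0 b" using x0G[OF a] x0G[OF b] e by simp
    then show "a = b" using x_inj[OF N0 a b] by simp
  qed
  have \<nu>_j: "\<And>j a. j < nseq l \<Longrightarrow> a < 2 * n \<Longrightarrow> norm_at m FF (x j a) (l-1) = \<nu> a"
  proof -
    fix j a assume j: "j < nseq l" and a: "a < 2 * n"
    have "l - 1 < l" using l0 by simp
    then show "norm_at m FF (x j a) (l-1) = \<nu> a" unfolding \<nu>_def using norm_eq[OF N0 j a] by simp
  qed
  have \<nu>_range: "\<And>a. a < 2 * n \<Longrightarrow> \<nu> a \<in> {r l..<m (l-1)}"
  proof -
    fix a assume a: "a < 2 * n"
    have sl: "Suc (l - 1) = l" using l0 by simp
    have "Xi m nseq r FF (x 1 a) (Suc (l-1)) = 1" using Xi_x[OF N1 a] sl by simp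
    then have "r (Suc (l-1)) \<le> norm_at m FF (x 1 a) (l-1) \<and> norm_at m FF (x 1 a) (l-1) < m (l-1)"
      using Xi_nonneg[of "x 1 a" "l-1"] by simp
    then show "\<nu> a \<in> {r l..<m (l-1)}" using \<nu>_j[OF N1 a] sl by simp
  qed
  have sep: "\<And>a b. a < 2 * n \<Longrightarrow> b < 2 * n \<Longrightarrow> a \<noteq> b \<Longrightarrow> \<exists>k<l. f 0 a k \<noteq> f 0 b k"
  proof -
    fix a b assume a: "a < 2 * n" and b: "b < 2 * n" and ne: "a \<noteq> b"
    have fa: "f 0 a \<in> aa 0" "f 0 b \<in> aa 0" using aa_img[OF N0] a b by auto
    have "f 0 a \<noteq> f 0 b" using inj_onD[OF f_inj[OF N0]] a b ne by auto
    then obtain k where "k < dd (aa 0)" "f 0 a k \<noteq> f 0 b k" using dd[OF aaA[OF N0]] fa by blast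
    moreover have "dd (aa 0) \<le> K" using AKd aa[OF N0] by blast
    ultimately show "\<exists>k<l. f 0 a k \<noteq> f 0 b k" using lK by (intro exI[of _ k]) simp
  qed
  define LR where "LR a = {b. b < 2 * n \<and> lex_less (f 0 b) (f 0 a)}" for a
  have LR_j: "\<And>j a. j < nseq l \<Longrightarrow> a < 2 * n \<Longrightarrow> {b. b < 2 * n \<and> lex_less (f j b) (f j a)} = LR a"
  proof -
    fix j a assume j: "j < nseq l" and a: "a < 2 * n"
    have "\<And>b. b < 2 * n \<Longrightarrow> lex_less (f j b) (f j a) \<longleftrightarrow> lex_less (f 0 b) (f 0 a)"
    proof -
      fix b assume b: "b < 2 * n"
      show "lex_less (f j b) (f j a) \<longleftrightarrow> lex_less (f 0 b) (f 0 a)"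
      proof (cases "b = a")
        case True then show ?thesis using lex_irrefl by simp
      next
        case False
        have h1: "\<forall>k<l. f 0 b k = f j b k" using e_eq[OF N0 j b] unfolding f_def .
        have h2: "\<forall>k<l. f 0 a k = f j a k" using e_eq[OF N0 j a] unfolding f_def .
        have h3: "\<exists>k<l. f 0 b k \<noteq> f 0 a k" using sep[OF b a False] .
        show ?thesis using lex_trunc[OF h1 h2 h3] by simp
      qed
    qed
    then show "{b. b < 2 * n \<and> lex_less (f j b) (f j a)} = LR a" unfolding LR_def by blast
  qed
  have LRsub: "\<And>a. LR a \<subseteq> {..<2 * n}" unfolding LR_def by auto
  have rank_j: "\<And>j a. j < nseq l \<Longrightarrow> a < 2 * n \<Longrightarrow> {z\<in>aa j. lex_less z (f j a)} = f j ` LR a"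
  proof -
    fix j a assume j: "j < nseq l" and a: "a < 2 * n"
    have "{z\<in>aa j. lex_less z (f j a)} = f j ` {b. b < 2 * n \<and> lex_less (f j b) (f j a)}"
      unfolding aa_img[OF j] by auto
    then show "{z\<in>aa j. lex_less z (f j a)} = f j ` LR a" using LR_j[OF j a] by simp
  qed
  have card_rank: "\<And>j a. j < nseq l \<Longrightarrow> a < 2 * n \<Longrightarrow> card {z\<in>aa j. lex_less z (f j a)} = card (LR a)"
    using rank_j card_image inj_on_subset[OF f_inj LRsub] by metis
  have aafin: "\<And>j. j < nseq l \<Longrightarrow> finite (aa j)" using Af aaA by blast
  have f_aa: "\<And>j a. j < nseq l \<Longrightarrow> a < 2 * n \<Longrightarrow> f j a \<in> aa j" using aa_img by auto
  have elem_j: "\<And>j a. j < nseq l \<Longrightarrow> a < 2 * n \<Longrightarrow> elem_at lex_less (aa j) (card (LR a)) = f j a"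
  proof -
    fix j a assume j: "j < nseq l" and a: "a < 2 * n"
    from EA1_lex[OF aafin[OF j] f_aa[OF j a]] show "elem_at lex_less (aa j) (card (LR a)) = f j a"
      using card_rank[OF j a] by simp
  qed
  have p_ex: "\<And>p. p < 2 * n \<Longrightarrow> \<exists>a<2 * n. card (LR a) = p"
  proof -
    fix p assume p: "p < 2 * n"
    have "card (aa 0) = 2 * n" using Ac aaA[OF N0] by blast
    then have h: "elem_at lex_less (aa 0) p \<in> aa 0 \<and> card {z\<in>aa 0. lex_less z (elem_at lex_less (aa 0) p)} = p"
      using EA2_lex[OF aafin[OF N0], of p] p by simp
    then obtain a where a: "a < 2 * n" "elem_at lex_less (aa 0) p = f 0 a" using aa_img[OF N0] by auto
    then have "card (LR a) = p" using h card_rank[OF N0 a(1)] by simp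
    then show "\<exists>a<2 * n. card (LR a) = p" using a(1) by blast
  qed
  have LR_lt: "\<And>a. a < 2 * n \<Longrightarrow> card (LR a) < 2 * n"
  proof -
    fix a assume a: "a < 2 * n"
    have "LR a \<subset> {..<2 * n}" using LRsub a lex_irrefl unfolding LR_def by blast
    then show "card (LR a) < 2 * n" using psubset_card_mono[of "{..<2 * n}" "LR a"] by simp
  qed
  define I0 where "I0 = {a. a < 2 * n \<and> \<tau> (card (LR a)) = 0}"
  define I1 where "I1 = {a. a < 2 * n \<and> \<tau> (card (LR a)) \<noteq> 0}"
  define V0 where "V0 = \<nu> ` I0"
  define V1 where "V1 = \<nu> ` I1"
  have I01: "I0 \<union> I1 = {..<2 * n}" "I0 \<inter> I1 = {}" unfolding I0_def I1_def by auto
  have \<nu>inj: "inj_on \<nu> {..<2 * n}" using \<nu>_inj by (auto intro: inj_onI)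
  have cV0: "card V0 = card I0" unfolding V0_def by (rule card_image, rule inj_on_subset[OF \<nu>inj]) (use I01 in auto)
  have cV1: "card V1 = card I1" unfolding V1_def by (rule card_image, rule inj_on_subset[OF \<nu>inj]) (use I01 in auto)
  have Ifin: "finite I0" "finite I1" unfolding I0_def I1_def by auto
  have "card (I0 \<union> I1) = card I0 + card I1" by (rule card_Un_disjoint) (use I01 Ifin in auto)
  then have csum: "card V0 + card V1 = 2 * n" using cV0 cV1 I01 by simp
  have Vdis: "V0 \<inter> V1 = {}"
  proof (rule ccontr)
    assume "V0 \<inter> V1 \<noteq> {}"
    then obtain a b where "a \<in> I0" "b \<in> I1" "\<nu> a = \<nu> b" unfolding V0_def V1_def by blast
    moreover then have "a = b" using \<nu>_inj unfolding I0_def I1_def by blast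
    ultimately show False unfolding I0_def I1_def by simp
  qed
  have Vfin: "finite V0" "finite V1" unfolding V0_def V1_def I0_def I1_def by auto
  obtain c where c: "c = V0 \<or> c = V1" "card c \<le> n"
    "\<forall>v\<in>V0 \<union> V1. (v \<in> c \<or> (card c = n \<and> v < Min c)) \<longleftrightarrow> v \<in> c"
    using choose_c[OF Vfin Vdis csum n0] by blast
  have V01: "\<And>a. a < 2 * n \<Longrightarrow> \<nu> a \<in> V0 \<union> V1" unfolding V0_def V1_def I0_def I1_def by auto
  have c_sub: "c \<subseteq> {r l..<m (l-1)}"
  proof
    fix v assume "v \<in> c"
    then have "v \<in> V0 \<union> V1" using c(1) by blast
    then obtain a where "a < 2 * n" "v = \<nu> a" unfolding V0_def V1_def I0_def I1_def by blast
    then show "v \<in> {r l..<m (l-1)}" using \<nu>_range by simp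
  qed
  have sl: "Suc (l - 1) = l" using l0 by simp
  have "c \<in> {A. A \<subseteq> {r (Suc (l-1))..<m (l-1)} \<and> card A \<le> n}" using c_sub c(2) sl by simp
  then have "c \<in> C (l-1) ` {i. 0 < i \<and> i < nseq (Suc (l-1))}" using Cen[THEN spec, of "l-1"] by simp
  then obtain jc where jc: "0 < jc" "jc < nseq l" "C (l-1) jc = c" using sl by auto
  have \<nu>V0: "\<And>a. a < 2 * n \<Longrightarrow> \<nu> a \<in> V0 \<longleftrightarrow> \<tau> (card (LR a)) = 0"
  proof -
    fix a assume a: "a < 2 * n"
    show "\<nu> a \<in> V0 \<longleftrightarrow> \<tau> (card (LR a)) = 0"
    proof
      assume "\<nu> a \<in> V0"
      then obtain b where "b \<in> I0" "\<nu> a = \<nu> b" unfolding V0_def by blast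
      moreover then have "a = b" using \<nu>_inj a unfolding I0_def by blast
      ultimately show "\<tau> (card (LR a)) = 0" unfolding I0_def by simp
    next
      assume "\<tau> (card (LR a)) = 0"
      then show "\<nu> a \<in> V0" unfolding V0_def I0_def using a by blast
    qed
  qed
  have \<nu>V1: "\<And>a. a < 2 * n \<Longrightarrow> \<nu> a \<in> V1 \<longleftrightarrow> \<tau> (card (LR a)) \<noteq> 0"
  proof -
    fix a assume a: "a < 2 * n"
    show "\<nu> a \<in> V1 \<longleftrightarrow> \<tau> (card (LR a)) \<noteq> 0"
    proof
      assume "\<nu> a \<in> V1"
      then obtain b where "b \<in> I1" "\<nu> a = \<nu> b" unfolding V1_def by blast
      moreover then have "a = b" using \<nu>_inj a unfolding I1_def by blast
      ultimately show "\<tau> (card (LR a)) \<noteq> 0" unfolding I1_def by simp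
    next
      assume "\<tau> (card (LR a)) \<noteq> 0"
      then show "\<nu> a \<in> V1" unfolding V1_def I1_def using a by blast
    qed
  qed
  have e0: "\<And>a. a < 2 * n \<Longrightarrow> f 0 a l = 0"
    unfolding f_def using e_Xi0 Xi_x[OF N0] by simp
  have ejc: "\<And>a. a < 2 * n \<Longrightarrow> f jc a l = (if \<nu> a \<in> c then int jc else - int jc)"
  proof -
    fix a assume a: "a < 2 * n"
    have "f jc a l = (if norm_at m FF (x jc a) (l-1) \<in> C (l-1) jc \<or> (card (C (l-1) jc) = n \<and> norm_at m FF (x jc a) (l-1) < Min (C (l-1) jc))
            then int jc else - int jc)" unfolding f_def by (rule e_Xipos[OF Xi_x[OF jc(2) a] jc(1)])
    then show "f jc a l = (if \<nu> a \<in> c then int jc else - int jc)"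
      using \<nu>_j[OF jc(2) a] jc(3) c(3) V01[OF a] by simp
  qed
  have cmp1: "\<And>a. a < 2 * n \<Longrightarrow> lex_less (f 0 a) (f jc a) \<longleftrightarrow> \<nu> a \<in> c"
  proof -
    fix a assume a: "a < 2 * n"
    have h1: "\<forall>k<l. f 0 a k = f jc a k" using e_eq[OF N0 jc(2) a] unfolding f_def .
    have h2: "f 0 a l \<noteq> f jc a l" using e0[OF a] ejc[OF a] jc(1) by simp
    show "lex_less (f 0 a) (f jc a) \<longleftrightarrow> \<nu> a \<in> c" using lex_first[OF h1 h2] e0[OF a] ejc[OF a] jc(1) by simp
  qed
  have cmp2: "\<And>a. a < 2 * n \<Longrightarrow> lex_less (f jc a) (f 0 a) \<longleftrightarrow> \<nu> a \<notin> c"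
  proof -
    fix a assume a: "a < 2 * n"
    have h1: "\<forall>k<l. f jc a k = f 0 a k" using e_eq[OF jc(2) N0 a] unfolding f_def .
    have h2: "f jc a l \<noteq> f 0 a l" using e0[OF a] ejc[OF a] jc(1) by simp
    show "lex_less (f jc a) (f 0 a) \<longleftrightarrow> \<nu> a \<notin> c" using lex_first[OF h1 h2] e0[OF a] ejc[OF a] jc(1) by simp
  qed
  have ne0: "aa 0 \<noteq> aa jc" using aa_ne[OF N0 jc(2)] jc(1) by simp
  have pair: "\<And>p. p < 2 * n \<Longrightarrow> \<exists>a<2 * n. elem_at lex_less (aa 0) p = f 0 a \<and> elem_at lex_less (aa jc) p = f jc a \<and> card (LR a) = p"
  proof -
    fix p assume p: "p < 2 * n"
    obtain a where a: "a < 2 * n" "card (LR a) = p" using p_ex[OF p] by blast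
    show "\<exists>a<2 * n. elem_at lex_less (aa 0) p = f 0 a \<and> elem_at lex_less (aa jc) p = f jc a \<and> card (LR a) = p"
      using elem_j[OF N0 a(1)] elem_j[OF jc(2) a(1)] a by blast
  qed
  from c(1) show ?thesis
  proof
    assume cV: "c = V0"
    show ?thesis
    proof (intro bexI conjI allI impI)
      show "aa 0 \<noteq> aa jc" by (rule ne0)
      show "aa 0 \<in> \<A>" using aaA[OF N0] .
      show "aa jc \<in> \<A>" using aaA[OF jc(2)] .
      fix i assume i: "i < 2 * n"
      obtain a where a: "a < 2 * n" "elem_at lex_less (aa 0) i = f 0 a" "elem_at lex_less (aa jc) i = f jc a" "card (LR a) = i"
        using pair[OF i] by blast
      show "lex_less (elem_at lex_less (aa 0) i) (elem_at lex_less (aa jc) i) \<longleftrightarrow> \<tau> i = 0"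
        using a cmp1[OF a(1)] \<nu>V0[OF a(1)] cV by simp
    qed
  next
    assume cV: "c = V1"
    show ?thesis
    proof (intro bexI conjI allI impI)
      show "aa jc \<noteq> aa 0" using ne0 by simp
      show "aa 0 \<in> \<A>" using aaA[OF N0] .
      show "aa jc \<in> \<A>" using aaA[OF jc(2)] .
      fix i assume i: "i < 2 * n"
      obtain a where a: "a < 2 * n" "elem_at lex_less (aa 0) i = f 0 a" "elem_at lex_less (aa jc) i = f jc a" "card (LR a) = i"
        using pair[OF i] by blast
      show "lex_less (elem_at lex_less (aa jc) i) (elem_at lex_less (aa 0) i) \<longleftrightarrow> \<tau> i = 0"
        using a cmp2[OF a(1)] \<nu>V1[OF a(1)] cV by simp
    qed
  qed
qed

end

theorem mainTheorem6:
  fixes \<F> :: "'a::wellorder set set"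
    and m nseq r :: "nat \<Rightarrow> nat"
    and C :: "nat \<Rightarrow> nat \<Rightarrow> nat set"
    and n :: nat
  assumes omega1_uncountable: "\<not> countable (UNIV :: 'a set)"
    and omega1_segments: "\<forall>x::'a. countable {y. y < x}"
    and scheme: "construction_scheme m nseq r \<F>"
    and capturing: "fully_Delta_capturing m nseq r \<F>"
    and big: "\<forall>k. nseq (Suc k) \<ge> 2 ^ (m k)"
    and C_enum: "\<forall>k. C k ` {i. 0 < i \<and> i < nseq (Suc k)} =
                       {A. A \<subseteq> {r (Suc k)..<m k} \<and> card A \<le> n}"
  shows "entangled lex_less (2 * n) (range (e_fun m nseq r \<F> C n))"
proof -
  have inf: "infinite (UNIV::'a set)" using omega1_uncountable countable_finite by blast
  interpret cs2 m nseq r \<F> C n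
  proof unfold_locales
    show "construction_scheme m nseq r \<F>" by (rule scheme)
    show "infinite (UNIV::'a set)" by (rule inf)
    show "fully_Delta_capturing m nseq r \<F>" by (rule capturing)
    show "\<forall>k. C k ` {i. 0 < i \<and> i < nseq (Suc k)} = {A. A \<subseteq> {r (Suc k)..<m k} \<and> card A \<le> n}"
      by (rule C_enum)
  qed
  show ?thesis unfolding entangled_def
  proof (intro conjI allI impI)
    show "\<not> countable (range (e_fun m nseq r \<F> C n))" by (rule range_unc[OF omega1_uncountable])
  next
    fix \<tau> :: "nat \<Rightarrow> nat" and \<A>
    assume A: "\<A> \<subseteq> {a. a \<subseteq> range (e_fun m nseq r \<F> C n) \<and> finite a \<and> card a = 2 * n} \<and>
       \<not> countable \<A> \<and> (\<forall>a\<in>\<A>. \<forall>b\<in>\<A>. a \<noteq> b \<longrightarrow> a \<inter> b = {})"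
    have A1: "\<A> \<subseteq> {a. a \<subseteq> range (e_fun m nseq r \<F> C n) \<and> finite a \<and> card a = 2 * n}" using A by (rule conjunct1)
    have A2: "\<not> countable \<A>" using A[THEN conjunct2] by (rule conjunct1)
    have A3: "\<forall>a\<in>\<A>. \<forall>b\<in>\<A>. a \<noteq> b \<longrightarrow> a \<inter> b = {}" using A[THEN conjunct2] by (rule conjunct2)
    show "\<exists>a\<in>\<A>. \<exists>b\<in>\<A>. a \<noteq> b \<and>
             (\<forall>i<2 * n. lex_less (elem_at lex_less a i) (elem_at lex_less b i) \<longleftrightarrow> \<tau> i = 0)"
    proof (cases "n = 0")
      case True
      have "\<A> \<subseteq> {{}}"
      proof
        fix a assume "a \<in> \<A>"
        then have "finite a" "card a = 0" using A1 True by auto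
        then show "a \<in> {{}}" by simp
      qed
      then have "countable \<A>" using countable_subset[of \<A> "{{}}"] by simp
      then show ?thesis using A2 by simp
    next
      case False
      then have n0: "0 < n" by simp
      show ?thesis by (rule main[OF n0 A1 A2 A3])
    qed
  qed
qed

end
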